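(* Let $L=\Lambda_{24}$ be the Leech lattice and $\mathrm{Co}_0=O(\Lambda_{24})$ its isometry group, and let $\varepsilon$ be a cocycle as in the context. Then there is no family of functions $(\zeta_g:L\to U(1))_{g\in\mathrm{Co}_0}$ such that for all $g,g_1,g_2\in\mathrm{Co}_0$ and $k,k'\in L$: (i) $\varepsilon(k,k')\zeta_g(k+k')=\zeta_g(k)\zeta_g(k')\varepsilon(g(k),g(k'))$ and (ii) $\zeta_{g_2}(g_1(k))\zeta_{g_1}(k)=\zeta_{g_2g_1}(k)$. In particular the exact sequence $1\to\mathrm{Hom}(L,\{\pm1\})\to O(\hat L)\to \mathrm{Co}_0\to1$ does not split, i.e. $\mathrm{Co}_0$ does not lift to a subgroup of $O(\hat L)$.
   Context: The Leech lattice can be taken as $\Lambda_{24}=(\tfrac1{\sqrt2}G_{24}+\sqrt2\mathbb Z^{24}_+)\cup(\tfrac1{2\sqrt2}\underline1+\tfrac1{\sqrt2}G_{24}+\sqrt2\mathbb Z^{24}_-)\subset\mathbb R^{24}$ (standard inner product), where $G_{24}$ is the extended binary Golay code with codewords viewed as $0/1$ vectors, $\mathbb Z^{24}_\pm=\{x\in\mathbb Z^{24}:|x|^2\equiv 0 \text{ resp. }1\pmod 2\}$, $\underline1=(1,\dots,1)$; it is the unique even unimodular rank-24 lattice without vectors of squared length 2. Let $\varepsilon:L\times L\to\{\pm1\}$ be a normalized 2-cocycle with $\varepsilon(k,k')\varepsilon(k',k)=(-1)^{k\cdot k'}$ (unique up to coboundary). $\hat L=\{\pm1\}\times L$ with $(a,k)(b,k')=(ab\varepsilon(k,k'),k+k')$,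 $\kappa=(-1,0)$, $e^k=(1,k)$; $O(\hat L)=\{f\in\mathrm{Aut}(\hat L):f(\kappa)=\kappa,\ \bar f\in O(L)\}$ where $\bar f(k)$ is the $L$-component of $f(e^k)$; $\mathrm{Hom}(L,\{\pm1\})$ embeds as $(a,k)\mapsto(a\eta(k),k)$. *)

theory Defs
  imports "HOL-Analysis.Analysis"
begin

type_synonym vec24 = "real ^ 24"

text \<open>G24 is the extended cyclic quadratic-residue code of
length 23 with generator polynomial 1 + x^2 + x^4 + x^5 + x^6 + x^10 + x^11, coordinate 23
being the parity bit. It is spanned over F2 by the 12 generators below (weight enumerator
1, 759, 2576, 759, 1 -- the extended binary Golay code).\<close>

definition golay_gen :: "nat \<Rightarrow> 24 set" where
  "golay_gen i = of_nat ` ({i + e | e. e \<in> {0, 2, 4, 5, 6, 10, 11}} \<union> {23})"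

definition G24 :: "24 set set" where
  "G24 = {{j. odd (card {i \<in> A. j \<in> golay_gen i})} | A. A \<subseteq> {..<12}}"

definition golay_vecs :: "vec24 set" where
  "golay_vecs = {(\<chi> j. if j \<in> c then 1 else 0) | c. c \<in> G24}"

definition Zplus :: "vec24 set" where
  "Zplus = {z. (\<forall>i. z $ i \<in> \<int>) \<and> (\<exists>m::int. z \<bullet> z = 2 * of_int m)}"

definition Zminus :: "vec24 set" where
  "Zminus = {z. (\<forall>i. z $ i \<in> \<int>) \<and> (\<exists>m::int. z \<bullet> z = 2 * of_int m + 1)}"

definition ones24 :: vec24 where
  "ones24 = (\<chi> j. 1)"

definition leech :: "vec24 set" where
  "leech =
     {(1 / sqrt 2) *\<^sub>R c + sqrt 2 *\<^sub>R z | c z. c \<in> golay_vecs \<and> z \<in> Zplus} \<union>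
     {(1 / (2 * sqrt 2)) *\<^sub>R ones24 + (1 / sqrt 2) *\<^sub>R c + sqrt 2 *\<^sub>R z | c z.
        c \<in> golay_vecs \<and> z \<in> Zminus}"

definition Co0 :: "(vec24 \<Rightarrow> vec24) set" where
  "Co0 = {g. orthogonal_transformation g \<and> g ` leech = leech}"

definition leech_cocycle :: "(vec24 \<Rightarrow> vec24 \<Rightarrow> complex) \<Rightarrow> bool" where
  "leech_cocycle \<epsilon> \<longleftrightarrow>
     (\<forall>k\<in>leech. \<forall>k'\<in>leech. \<epsilon> k k' \<in> {1, -1}) \<and>
     (\<forall>k\<in>leech. \<epsilon> 0 k = 1 \<and> \<epsilon> k 0 = 1) \<and>
     (\<forall>k\<in>leech. \<forall>k'\<in>leech. \<forall>k''\<in>leech.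
        \<epsilon> k k' * \<epsilon> (k + k') k'' = \<epsilon> k' k'' * \<epsilon> k (k' + k'')) \<and>
     (\<forall>k\<in>leech. \<forall>k'\<in>leech. \<epsilon> k k' * \<epsilon> k' k = (-1) powi \<lfloor>k \<bullet> k'\<rfloor>)"

definition hatL :: "(complex \<times> vec24) set" where
  "hatL = {(a, k). a \<in> {1, -1} \<and> k \<in> leech}"

definition hat_mult :: "(vec24 \<Rightarrow> vec24 \<Rightarrow> complex) \<Rightarrow> complex \<times> vec24 \<Rightarrow> complex \<times> vec24 \<Rightarrow> complex \<times> vec24" where
  "hat_mult \<epsilon> x y = (fst x * fst y * \<epsilon> (snd x) (snd y), snd x + snd y)"

definition O_hat :: "(vec24 \<Rightarrow> vec24 \<Rightarrow> complex) \<Rightarrow> ((complex \<times> vec24) \<Rightarrow> (complex \<times> vec24)) set" where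
  "O_hat \<epsilon> = {f. bij_betw f hatL hatL \<and>
      (\<forall>x\<in>hatL. \<forall>y\<in>hatL. f (hat_mult \<epsilon> x y) = hat_mult \<epsilon> (f x) (f y)) \<and>
      f (-1, 0) = (-1, 0) \<and>
      (\<exists>g\<in>Co0. \<forall>k\<in>leech. snd (f (1, k)) = g k)}"

end

theory Submission
  imports Defs
begin

definition idx :: "24 \<Rightarrow> nat" where "idx j = nat (Rep_bit0 j)"
lemma idx_lt: "idx j < 24"
  unfolding idx_def using Rep_bit0[of j] by auto
lemma of_nat_idx: "(of_nat (idx j) :: 24) = j"
  unfolding idx_def using Rep_bit0[of j]
  by (simp add: bit0.of_nat_eq Rep_bit0_inverse)
lemma idx_of_nat: "n < 24 \<Longrightarrow> idx (of_nat n :: 24) = n"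
  unfolding idx_def by (simp add: bit0.of_nat_eq Abs_bit0_inverse)
lemma of_nat24_inj: "m < 24 \<Longrightarrow> n < 24 \<Longrightarrow> ((of_nat m :: 24) = of_nat n) = (m = n)"
  by (metis idx_of_nat)
lemma inj_on_of_nat24: "inj_on (of_nat :: nat \<Rightarrow> 24) {..<24}"
  by (auto simp: inj_on_def of_nat24_inj)
lemma UNIV24: "(UNIV :: 24 set) = of_nat ` {..<24}"
  using idx_lt of_nat_idx by (metis UNIV_eq_I image_eqI lessThan_iff)
lemma all24: "(\<forall>j::24. P j) = (\<forall>n<24. P (of_nat n))"
  by (metis idx_lt of_nat_idx)
lemma sum24: "(\<Sum>j\<in>(UNIV::24 set). f j) = (\<Sum>n<24. f (of_nat n))"
  unfolding UNIV24 by (simp add: sum.reindex inj_on_of_nat24)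
lemma mem_img24: "S \<subseteq> {..<24} \<Longrightarrow> n < 24 \<Longrightarrow> ((of_nat n :: 24) \<in> of_nat ` S) = (n \<in> S)"
  using of_nat24_inj by auto

lemma lt24_expand: "(\<forall>n::nat<24. P n) = (P 0 \<and> P 1 \<and> P 2 \<and> P 3 \<and> P 4 \<and> P 5 \<and> P 6 \<and> P 7 \<and> P 8 \<and> P 9 \<and> P 10 \<and> P 11
   \<and> P 12 \<and> P 13 \<and> P 14 \<and> P 15 \<and> P 16 \<and> P 17 \<and> P 18 \<and> P 19 \<and> P 20 \<and> P 21 \<and> P 22 \<and> P 23)"
  by (simp add: numeral_eq_Suc less_Suc_eq all_conj_distrib conj_ac)


definition gnat :: "nat \<Rightarrow> nat set" where
  "gnat i = (\<lambda>e. i+e) ` {0,2,4,5,6,10,11} \<union> {23}"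
definition cwn :: "nat set \<Rightarrow> nat set" where
  "cwn A = Set.filter (\<lambda>n. odd (card (Set.filter (\<lambda>i. n \<in> gnat i) A))) {..<24}"
definition Dn :: "nat set" where "Dn = {0,2,4,6,8,11,12,17,19,20,21,23}"
lemma gen_D_even: "\<forall>i\<in>{..<12::nat}. even (card (gnat i \<inter> Dn))"
  by code_simp
definition pl :: "nat list" where "pl = [23, 22, 11, 15, 17, 9, 19, 13, 20, 5, 16, 2, 21, 7, 18, 3, 10, 4, 14, 6, 8, 12, 1, 0]"


definition cw :: "nat set \<Rightarrow> 24 set" where
  "cw A = {j. odd (card {i\<in>A. j \<in> golay_gen i})}"
definition xr :: "'a set \<Rightarrow> 'a set \<Rightarrow> 'a set" where "xr X Y = (X - Y) \<union> (Y - X)"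

lemma G24_cw: "G24 = {cw A | A. A \<subseteq> {..<12}}"
  unfolding G24_def cw_def by simp

lemma golay_gen_eq: "golay_gen i = of_nat ` gnat i"
proof -
  have "{i + e |e. e \<in> {0::nat, 2, 4, 5, 6, 10, 11}} = (\<lambda>e. i+e) ` {0,2,4,5,6,10,11}" by blast
  then show ?thesis unfolding golay_gen_def gnat_def by simp
qed

lemma gnat_lt: "i < 12 \<Longrightarrow> gnat i \<subseteq> {..<24}"
  unfolding gnat_def by auto

lemma mem_gen: "i < 12 \<Longrightarrow> (j \<in> golay_gen i) = (idx j \<in> gnat i)"
proof -
  assume i: "i < 12"
  have "j = of_nat (idx j)" by (simp add: of_nat_idx)
  then show ?thesis using mem_img24[OF gnat_lt[OF i] idx_lt[of j]] golay_gen_eq by metis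
qed

lemma cw_eq: assumes "A \<subseteq> {..<12}" shows "cw A = of_nat ` cwn A"
proof -
  have fA: "finite A" using assms finite_subset by blast
  have *: "\<And>j. {i\<in>A. j \<in> golay_gen i} = Set.filter (\<lambda>i. idx j \<in> gnat i) A"
    using assms mem_gen by (auto simp: Set.filter_eq)
  have "cw A = {j. idx j \<in> cwn A}"
    unfolding cw_def cwn_def using * idx_lt by (auto simp: Set.filter_eq)
  also have "\<dots> = of_nat ` cwn A"
  proof
    show "{j. idx j \<in> cwn A} \<subseteq> of_nat ` cwn A"
      using of_nat_idx by (metis (mono_tags, lifting) image_eqI mem_Collect_eq subsetI)
    show "of_nat ` cwn A \<subseteq> {j. idx j \<in> cwn A}"
      using idx_of_nat by (auto simp: cwn_def Set.filter_eq)
  qed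
  finally show ?thesis .
qed

lemma card_xr_parity:
  assumes "finite A" "finite B"
  shows "odd (card (xr A B)) = (odd (card A) \<noteq> odd (card B))"
proof -
  have a: "card A = card (A - B) + card (A \<inter> B)"
    using assms by (metis Diff_Diff_Int card_Diff_subset_Int inf_le1 le_add_diff_inverse2 card_mono
        finite_Diff Int_commute finite_Int add.commute card_Int_Diff)
  have b: "card B = card (B - A) + card (A \<inter> B)"
    using assms by (metis Int_commute card_Int_Diff add.commute)
  have c: "card (xr A B) = card (A - B) + card (B - A)"
    unfolding xr_def using assms by (subst card_Un_disjoint) auto
  show ?thesis using a b c by auto
qed

lemma filter_xr: "{i \<in> xr A B. P i} = xr {i\<in>A. P i} {i\<in>B. P i}"
  unfolding xr_def by auto

lemma cw_xr: assumes "finite A" "finite B" shows "xr (cw A) (cw B) = cw (xr A B)"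
proof -
  have "\<And>j. odd (card {i\<in>xr A B. j \<in> golay_gen i}) =
     (odd (card {i\<in>A. j \<in> golay_gen i}) \<noteq> odd (card {i\<in>B. j \<in> golay_gen i}))"
    unfolding filter_xr using assms by (intro card_xr_parity) auto
  then show ?thesis unfolding cw_def xr_def by auto
qed

lemma G24_xr: assumes "X \<in> G24" "Y \<in> G24" shows "xr X Y \<in> G24"
proof -
  obtain A B where AB: "X = cw A" "Y = cw B" "A \<subseteq> {..<12}" "B \<subseteq> {..<12}"
    using assms unfolding G24_cw by auto
  have "finite A" "finite B" using AB finite_subset by auto
  then have "xr X Y = cw (xr A B)" using AB cw_xr by simp
  moreover have "xr A B \<subseteq> {..<12}" using AB unfolding xr_def by auto
  ultimately show ?thesis unfolding G24_cw by auto
qed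

lemma cw_insert: assumes "finite A" "a \<notin> A" shows "cw (insert a A) = xr (golay_gen a) (cw A)"
proof -
  have "\<And>j. card {i\<in>insert a A. j \<in> golay_gen i} = card {i\<in>A. j \<in> golay_gen i} + (if j \<in> golay_gen a then 1 else 0)"
  proof -
    fix j
    show "card {i\<in>insert a A. j \<in> golay_gen i} = card {i\<in>A. j \<in> golay_gen i} + (if j \<in> golay_gen a then 1 else 0)"
    proof (cases "j \<in> golay_gen a")
      case True
      then have "{i\<in>insert a A. j \<in> golay_gen i} = insert a {i\<in>A. j \<in> golay_gen i}" by auto
      then show ?thesis using True assms by simp
    next
      case False
      then have "{i\<in>insert a A. j \<in> golay_gen i} = {i\<in>A. j \<in> golay_gen i}" by auto
      then show ?thesis using False by simp
    qed
  qed
  then show ?thesis unfolding cw_def xr_def by auto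
qed

lemma cw_empty: "cw {} = {}" unfolding cw_def by simp

lemma card_xr_Int_parity:
  assumes "finite S"
  shows "odd (card (xr X Y \<inter> S)) = (odd (card (X \<inter> S)) \<noteq> odd (card (Y \<inter> S)))"
proof -
  have "xr X Y \<inter> S = xr (X \<inter> S) (Y \<inter> S)" unfolding xr_def by auto
  then show ?thesis using card_xr_parity[of "X \<inter> S" "Y \<inter> S"] assms by simp
qed

lemma G24_induct:
  assumes "X \<in> G24" "P {}" "\<And>a Y. a < 12 \<Longrightarrow> Y \<in> G24 \<Longrightarrow> P Y \<Longrightarrow> P (xr (golay_gen a) Y)"
  shows "P X"
proof -
  obtain A where A: "X = cw A" "A \<subseteq> {..<12}" using assms(1) unfolding G24_cw by auto
  have "finite A" using A finite_subset by auto
  then have "A \<subseteq> {..<12} \<longrightarrow> P (cw A) \<and> cw A \<in> G24"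
  proof (induction A rule: finite_induct)
    case empty
    then show ?case using assms(2) cw_empty unfolding G24_cw by (metis (mono_tags, lifting) empty_subsetI mem_Collect_eq)
  next
    case (insert a F)
    then show ?case using assms(3) cw_insert unfolding G24_cw by (smt (verit, ccfv_SIG) insert_subset lessThan_iff mem_Collect_eq)
  qed
  then show ?thesis using A by auto
qed



definition vv :: "int list \<Rightarrow> vec24" where "vv a = (\<chi> j. of_int (a ! idx j))"
definition gvec :: "24 set \<Rightarrow> vec24" where "gvec S = (\<chi> j. if j \<in> S then 1 else 0)"

lemma vv_nth: "n < 24 \<Longrightarrow> vv a $ of_nat n = of_int (a ! n)"
  unfolding vv_def by (simp add: idx_of_nat)

lemma vec_eq24: "(\<And>n. n < 24 \<Longrightarrow> (x::vec24) $ of_nat n = y $ of_nat n) \<Longrightarrow> x = y"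
  by (metis vec_eq_iff of_nat_idx idx_lt)

lemma inner24: "(x::vec24) \<bullet> y = (\<Sum>n<24. x $ of_nat n * y $ of_nat n)"
  unfolding inner_vec_def by (simp add: sum24)

lemma sqrt8: "sqrt 8 = 2 * sqrt 2"
proof -
  have a: "sqrt 4 = (2::real)" by (simp add: real_sqrt_unique)
  have "sqrt (4 * 2) = sqrt 4 * (sqrt 2::real)" by (rule real_sqrt_mult)
  then show ?thesis using a by simp
qed

lemma gvec_golay: "S \<in> G24 \<Longrightarrow> gvec S \<in> golay_vecs"
  unfolding golay_vecs_def gvec_def by auto

lemma gvec_nth: "C \<subseteq> {..<24} \<Longrightarrow> n < 24 \<Longrightarrow> gvec (of_nat ` C) $ of_nat n = (if n \<in> C then 1 else 0)"
  unfolding gvec_def using mem_img24 by simp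

lemma vv_Zplus: assumes "even (\<Sum>n<24. (z!n)^2)" shows "vv z \<in> Zplus"
proof -
  obtain m where m: "(\<Sum>n<24. (z!n)^2) = 2 * m" using assms by (auto elim: evenE)
  have "vv z \<bullet> vv z = of_int (\<Sum>n<24. (z!n)^2)"
    unfolding inner24 by (simp add: vv_nth power2_eq_square)
  then have "vv z \<bullet> vv z = 2 * of_int m" using m by simp
  moreover have "\<forall>i. vv z $ i \<in> \<int>" unfolding vv_def by simp
  ultimately show ?thesis unfolding Zplus_def by blast
qed

lemma vv_Zminus: assumes "odd (\<Sum>n<24. (z!n)^2)" shows "vv z \<in> Zminus"
proof -
  obtain m where m: "(\<Sum>n<24. (z!n)^2) = 2 * m + 1" using assms by (auto elim: oddE)
  have "vv z \<bullet> vv z = of_int (\<Sum>n<24. (z!n)^2)"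
    unfolding inner24 by (simp add: vv_nth power2_eq_square)
  then have "vv z \<bullet> vv z = 2 * of_int m + 1" using m by simp
  moreover have "\<forall>i. vv z $ i \<in> \<int>" unfolding vv_def by simp
  ultimately show ?thesis unfolding Zminus_def by blast
qed

lemma leech_even:
  assumes "of_nat ` C \<in> G24" "C \<subseteq> {..<24}"
    "\<forall>n<24. a!n = 2*(if n\<in>C then 1 else 0) + 4*z!n" "even (\<Sum>n<24. (z!n)^2)"
  shows "(1/sqrt 8) *\<^sub>R vv a \<in> leech"
proof -
  have eq: "(1/sqrt 8) *\<^sub>R vv a = (1 / sqrt 2) *\<^sub>R gvec (of_nat ` C) + sqrt 2 *\<^sub>R vv z"
  proof (rule vec_eq24)
    fix n :: nat assume n: "n < 24"
    have s2: "sqrt 2 * sqrt 2 = (2::real)" by simp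
    have "a!n = 2*(if n\<in>C then 1 else 0) + 4*z!n" using assms(3) n by blast
    then show "((1/sqrt 8) *\<^sub>R vv a) $ of_nat n = ((1 / sqrt 2) *\<^sub>R gvec (of_nat ` C) + sqrt 2 *\<^sub>R vv z) $ of_nat n"
      using n assms(2) s2 by (simp add: vv_nth gvec_nth sqrt8 field_simps)
  qed
  show ?thesis unfolding leech_def eq
    using gvec_golay[OF assms(1)] vv_Zplus[OF assms(4)] by blast
qed

lemma leech_odd:
  assumes "of_nat ` C \<in> G24" "C \<subseteq> {..<24}"
    "\<forall>n<24. a!n = 1 + 2*(if n\<in>C then 1 else 0) + 4*z!n" "odd (\<Sum>n<24. (z!n)^2)"
  shows "(1/sqrt 8) *\<^sub>R vv a \<in> leech"
proof -
  have eq: "(1/sqrt 8) *\<^sub>R vv a = (1 / (2 * sqrt 2)) *\<^sub>R ones24 + (1 / sqrt 2) *\<^sub>R gvec (of_nat ` C) + sqrt 2 *\<^sub>R vv z"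
  proof (rule vec_eq24)
    fix n :: nat assume n: "n < 24"
    have s2: "sqrt 2 * sqrt 2 = (2::real)" by simp
    have "a!n = 1 + 2*(if n\<in>C then 1 else 0) + 4*z!n" using assms(3) n by blast
    then show "((1/sqrt 8) *\<^sub>R vv a) $ of_nat n = ((1 / (2 * sqrt 2)) *\<^sub>R ones24 + (1 / sqrt 2) *\<^sub>R gvec (of_nat ` C) + sqrt 2 *\<^sub>R vv z) $ of_nat n"
      using n assms(2) s2 by (simp add: vv_nth gvec_nth sqrt8 ones24_def field_simps)
  qed
  show ?thesis unfolding leech_def eq
    using gvec_golay[OF assms(1)] vv_Zminus[OF assms(4)] by blast
qed

lemma G24_cwn: "A \<subseteq> {..<12} \<Longrightarrow> of_nat ` cwn A \<in> G24"
  unfolding G24_cw using cw_eq by blast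

lemma cwn_sub: "cwn A \<subseteq> {..<24}" unfolding cwn_def by auto



definition Dset :: "24 set" where "Dset = of_nat ` Dn"
definition gm :: "vec24 \<Rightarrow> vec24" where "gm x = (\<chi> j. if j \<in> Dset then - x$j else x$j)"
definition pm :: "24 \<Rightarrow> 24" where "pm j = of_nat (pl ! idx j)"
definition hm :: "vec24 \<Rightarrow> vec24" where "hm x = (\<chi> j. x $ pm j)"

lemma pl_lt: "\<forall>n<24. pl ! n < 24" by (simp add: lt24_expand pl_def)
lemma pl_inv: "\<forall>n<24. pl ! (pl ! n) = n" by (simp add: lt24_expand pl_def)
lemma pl_D: "\<forall>n<24. (pl ! n \<in> Dn) = (n \<in> Dn)" by (simp add: lt24_expand pl_def Dn_def)
lemma Dn_sub: "Dn \<subseteq> {..<24}" by (auto simp: Dn_def)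

lemma pm_of_nat: "n < 24 \<Longrightarrow> pm (of_nat n) = of_nat (pl ! n)"
  unfolding pm_def by (simp add: idx_of_nat)
lemma pm_pm[simp]: "pm (pm j) = j"
  unfolding pm_def using pl_lt pl_inv idx_lt idx_of_nat of_nat_idx by metis
lemma inj_pm: "inj pm" by (metis injI pm_pm)
lemma surj_pm: "surj pm" by (metis surjI pm_pm)
lemma pm_D: "(pm j \<in> Dset) = (j \<in> Dset)"
proof -
  have "j = of_nat (idx j)" by (simp add: of_nat_idx)
  then show ?thesis unfolding Dset_def
    using pm_of_nat[OF idx_lt[of j]] pl_lt pl_D idx_lt mem_img24[OF Dn_sub] by metis
qed

lemma gm_gm[simp]: "gm (gm x) = x" unfolding gm_def by (simp add: vec_eq_iff)
lemma hm_hm[simp]: "hm (hm x) = x" unfolding hm_def by (simp add: vec_eq_iff)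
lemma gm_hm: "gm (hm x) = hm (gm x)" unfolding gm_def hm_def by (simp add: vec_eq_iff pm_D)

lemma gm_comp: "gm \<circ> gm = id" by (simp add: fun_eq_iff)
lemma hm_comp: "hm \<circ> hm = id" by (simp add: fun_eq_iff)
lemma gh_comm: "gm \<circ> hm = hm \<circ> gm" by (simp add: fun_eq_iff gm_hm)

lemma linear_gm: "linear gm"
  by (rule linearI) (auto simp: gm_def vec_eq_iff)
lemma linear_hm: "linear hm"
  by (rule linearI) (auto simp: hm_def vec_eq_iff)

lemma orth_gm: "orthogonal_transformation gm"
  unfolding orthogonal_transformation_def
  by (simp add: linear_gm inner_vec_def gm_def) (auto intro!: sum.cong)

lemma sum_pm: "(\<Sum>j\<in>UNIV. f (pm j)) = (\<Sum>j\<in>UNIV. (f j :: real))"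
  using sum.reindex[OF inj_pm, of f] surj_pm by simp

lemma orth_hm: "orthogonal_transformation hm"
  unfolding orthogonal_transformation_def
  by (simp add: linear_hm inner_vec_def hm_def sum_pm[of "\<lambda>j. _ $ j * _ $ j"])

lemma orth_id: "orthogonal_transformation id"
  using orthogonal_transformation_id by (simp add: id_def)

lemma id_Co0: "id \<in> Co0" unfolding Co0_def using orth_id by simp



definition setl :: "bool list \<Rightarrow> nat set" where "setl b = {n. n < length b \<and> b ! n}"
definition genb :: "nat \<Rightarrow> bool list" where
  "genb i = map (\<lambda>n. n = 23 \<or> (i \<le> n \<and> n - i \<in> {0,2,4,5,6,10,11})) [0..<24]"
definition xorb :: "bool list \<Rightarrow> bool list \<Rightarrow> bool list" where
  "xorb b c = map2 (\<noteq>) b c"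
fun xfold :: "nat list \<Rightarrow> bool list" where
  "xfold [] = replicate 24 False"
| "xfold (a # A) = xorb (genb a) (xfold A)"
definition permb :: "bool list \<Rightarrow> bool list" where
  "permb b = map (\<lambda>n. b ! (pl ! n)) [0..<24]"

lemma upt24: "[0..<24] = [0,1,2,3,4,5,6,7,8,9,10,11,12,13,14,15,16,17,18,19,20,21,22,23]"
  by (simp add: upt_rec)

lemma len_genb: "length (genb i) = 24" by (simp add: genb_def)
lemma len_xfold: "length (xfold A) = 24"
  by (induction A) (auto simp: xorb_def len_genb)

lemma setl_genb: "i < 12 \<Longrightarrow> setl (genb i) = gnat i"
  unfolding setl_def genb_def gnat_def by (auto simp: nth_map)

lemma setl_xorb: "length b = length c \<Longrightarrow> setl (xorb b c) = xr (setl b) (setl c)"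
  unfolding setl_def xorb_def xr_def by auto

lemma setl_sub: "length b = 24 \<Longrightarrow> setl b \<subseteq> {..<24}" unfolding setl_def by auto

lemma img_xr: "X \<subseteq> {..<24} \<Longrightarrow> Y \<subseteq> {..<24} \<Longrightarrow>
   (of_nat ` xr X Y :: 24 set) = xr (of_nat ` X) (of_nat ` Y)"
  unfolding xr_def using of_nat24_inj by auto

lemma cw_xfold: "distinct A \<Longrightarrow> set A \<subseteq> {..<12} \<Longrightarrow> cw (set A) = of_nat ` setl (xfold A)"
proof (induction A)
  case Nil
  then show ?case using cw_empty by (simp add: setl_def)
next
  case (Cons a A)
  have "cw (set (a # A)) = xr (golay_gen a) (cw (set A))"
    using Cons.prems by (simp add: cw_insert)
  also have "\<dots> = xr (of_nat ` setl (genb a)) (of_nat ` setl (xfold A))"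
    using Cons by (simp add: golay_gen_eq setl_genb)
  also have "\<dots> = of_nat ` setl (xfold (a # A))"
    by (simp add: setl_xorb len_genb len_xfold img_xr setl_sub)
  finally show ?case .
qed

lemma xfold_G24: "distinct A \<Longrightarrow> set A \<subseteq> {..<12} \<Longrightarrow> of_nat ` setl (xfold A) \<in> G24"
  using cw_xfold[symmetric] unfolding G24_cw by blast

lemma setl_permb: "length b = 24 \<Longrightarrow> setl (permb b) = (\<lambda>n. pl ! n) ` setl b"
  unfolding setl_def permb_def using pl_lt pl_inv
  apply (auto simp: image_iff)
  apply (metis)
  done

definition tabl :: "nat list list" where
  "tabl = [[0, 4, 5, 7, 8], [0, 4, 5, 7, 8, 11], [0, 2, 5, 7, 8, 10], [0, 2, 8, 9], [0, 2, 3, 5, 7, 9], [0, 3, 4, 5], [0, 5, 6, 7, 8, 10], [0, 6, 7, 8, 9, 10], [0, 2, 5, 6, 7, 10], [0, 3, 4, 5, 6, 7], [0, 2, 3, 8, 9, 10], [0, 1]]"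

lemma tab_ok: "\<forall>a\<in>{..<12::nat}. permb (genb a) = xfold (tabl ! a)"
  by code_simp

lemma tab_sub: "\<forall>a\<in>{..<12::nat}. set (tabl ! a) \<subseteq> {..<12} \<and> distinct (tabl ! a)"
  by code_simp

lemma empty_G24: "{} \<in> G24"
  unfolding G24_cw using cw_empty by blast

lemma pm_gen: assumes "a < 12" shows "pm ` golay_gen a \<in> G24"
proof -
  have "pm ` golay_gen a = of_nat ` ((\<lambda>n. pl!n) ` gnat a)"
    unfolding golay_gen_eq image_image using gnat_lt[OF assms] pm_of_nat
    by (intro image_cong) auto
  also have "\<dots> = of_nat ` setl (xfold (tabl ! a))"
    using tab_ok assms setl_genb setl_permb len_genb by (metis lessThan_iff)
  finally show ?thesis using xfold_G24 tab_sub assms by simp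
qed

lemma pm_G24: assumes "S \<in> G24" shows "pm ` S \<in> G24"
  using assms
proof (rule G24_induct)
  show "pm ` {} \<in> G24" using empty_G24 by simp
next
  fix a :: nat and Y assume a: "a < 12" and "pm ` Y \<in> G24"
  moreover have "pm ` xr (golay_gen a) Y = xr (pm ` golay_gen a) (pm ` Y)"
    unfolding xr_def using inj_pm by (simp add: image_Un image_set_diff)
  ultimately show "pm ` xr (golay_gen a) Y \<in> G24" using pm_gen G24_xr by simp
qed

lemma gen_D: assumes "a < 12" shows "even (card (golay_gen a \<inter> Dset))"
proof -
  have "golay_gen a \<inter> Dset = of_nat ` (gnat a \<inter> Dn)"
    unfolding golay_gen_eq Dset_def
    using inj_on_of_nat24 gnat_lt[OF assms] Dn_sub
    by (simp add: inj_on_image_Int)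
  moreover have "card (of_nat ` (gnat a \<inter> Dn) :: 24 set) = card (gnat a \<inter> Dn)"
    using inj_on_of_nat24 Dn_sub by (intro card_image) (auto intro: inj_on_subset)
  ultimately show ?thesis using gen_D_even assms by simp
qed

lemma G24_D_even: assumes "S \<in> G24" shows "even (card (S \<inter> Dset))"
  using assms
proof (rule G24_induct)
  show "even (card ({} \<inter> Dset))" by simp
next
  fix a :: nat and Y assume "a < 12" "even (card (Y \<inter> Dset))"
  then show "even (card (xr (golay_gen a) Y \<inter> Dset))"
    using card_xr_Int_parity[of Dset "golay_gen a" Y] gen_D by simp
qed

lemma setl_map: "setl (map P [0..<24]) = {n. n < 24 \<and> P n}"
  unfolding setl_def by auto

lemma D_xfold: "xfold [0,5,7,8,10] = map (\<lambda>n. n \<in> Dn) [0..<24]"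
  by code_simp

lemma Dset_G24: "Dset \<in> G24"
proof -
  have "setl (xfold [0,5,7,8,10]) = Dn" unfolding D_xfold setl_map using Dn_sub by auto
  then show ?thesis unfolding Dset_def using xfold_G24[of "[0,5,7,8,10]"] by simp
qed

lemma card_Dset: "card Dset = 12"
proof -
  have "card Dset = card Dn" unfolding Dset_def
    using inj_on_of_nat24 Dn_sub by (intro card_image) (auto intro: inj_on_subset)
  then show ?thesis by (simp add: Dn_def)
qed

lemma sum_indic: "(\<Sum>j\<in>(UNIV::24 set). if j \<in> X then 1 else 0) = (real (card X))"
  by (simp add: sum.If_cases)

lemma golay_vecsE: assumes "c \<in> golay_vecs" obtains S where "S \<in> G24" "c = gvec S"
  using assms unfolding golay_vecs_def gvec_def by auto

lemma gvec_nth': "gvec S $ j = (if j \<in> S then 1 else 0)" unfolding gvec_def by simp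

lemma s2: "sqrt 2 * sqrt 2 = (2::real)" by simp



lemma r2: "1 / (2 * sqrt 2) + 1 / (2 * sqrt 2) + 1 / sqrt 2 = sqrt (2::real)"
proof -
  have r: "sqrt 2 \<noteq> (0::real)" by simp
  have "1 / (2 * sqrt 2) + 1 / (2 * sqrt 2) + 1 / sqrt 2 = 2 / sqrt (2::real)" by simp
  also have "\<dots> = sqrt 2 * sqrt 2 / sqrt 2" by simp
  also have "\<dots> = sqrt 2" using r by (rule nonzero_mult_div_cancel_right)
  finally show ?thesis .
qed

lemma r1: "1 / sqrt 2 + 1 / sqrt 2 = sqrt (2::real)"
proof -
  have r: "sqrt 2 \<noteq> (0::real)" by simp
  have "1 / sqrt 2 + 1 / sqrt 2 = 2 / sqrt (2::real)" by simp
  also have "\<dots> = sqrt 2 * sqrt 2 / sqrt 2" by simp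
  also have "\<dots> = sqrt 2" using r by (rule nonzero_mult_div_cancel_right)
  finally show ?thesis .
qed

lemma k1g: "b + b = (r::real) \<Longrightarrow> - (b * c + r * x) = b * c + r * (- x - c)"
  by (simp add: algebra_simps)
lemma k2g: "a + a + b = (r::real) \<Longrightarrow> - (a + b * c + r * x) = a + b * (1 - c) + r * (- x - 1)"
  by (simp add: algebra_simps)

lemma k1: "- ((1 / sqrt 2) * c + sqrt 2 * x) = (1 / sqrt 2) * c + sqrt 2 * (- x - c)"
  by (rule k1g[OF r1])
lemma k2: "- (1 / (2 * sqrt 2) + (1 / sqrt 2) * c + sqrt 2 * x) = 1 / (2 * sqrt 2) + (1 / sqrt 2) * (1 - c) + sqrt 2 * (- x - 1)"
  by (rule k2g[OF r2])

lemma gm_leech1: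
  assumes S: "S \<in> G24" and z: "z \<in> Zplus"
  shows "gm ((1 / sqrt 2) *\<^sub>R gvec S + sqrt 2 *\<^sub>R z) \<in> leech"
proof -
  define z' where "z' = (\<chi> j. if j \<in> Dset then - z$j - gvec S $ j else z$j)"
  have eq: "gm ((1 / sqrt 2) *\<^sub>R gvec S + sqrt 2 *\<^sub>R z) = (1 / sqrt 2) *\<^sub>R gvec S + sqrt 2 *\<^sub>R z'"
    unfolding gm_def z'_def vec_eq_iff
  proof
    fix j
    show "(\<chi> j. if j \<in> Dset then - ((1 / sqrt 2) *\<^sub>R gvec S + sqrt 2 *\<^sub>R z) $ j else ((1 / sqrt 2) *\<^sub>R gvec S + sqrt 2 *\<^sub>R z) $ j) $ j =
         ((1 / sqrt 2) *\<^sub>R gvec S + sqrt 2 *\<^sub>R (\<chi> j. if j \<in> Dset then - z $ j - gvec S $ j else z $ j)) $ j"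
      using k1[of "gvec S $ j" "z $ j"] by simp
  qed
  have zi: "\<forall>i. z $ i \<in> \<int>" and zm: "\<exists>m::int. z \<bullet> z = 2 * of_int m" using z unfolding Zplus_def by auto
  obtain m :: int where m: "z \<bullet> z = 2 * of_int m" using zm by blast
  have pt: "\<And>j. z'$j * z'$j = z$j * z$j + 2 * (if j \<in> Dset then z$j * gvec S $ j else 0) + (if j \<in> S \<inter> Dset then 1 else 0)"
    unfolding z'_def gvec_nth' by (auto simp: algebra_simps)
  have "z' \<bullet> z' = (\<Sum>j\<in>UNIV. z$j * z$j) + (\<Sum>j\<in>UNIV. 2 * (if j \<in> Dset then z$j * gvec S $ j else 0)) + (\<Sum>j\<in>UNIV. if j \<in> S \<inter> Dset then 1 else 0)"
    unfolding inner_vec_def inner_real_def pt by (simp only: sum.distrib)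
  also have "\<dots> = z \<bullet> z + 2 * (\<Sum>j\<in>UNIV. if j \<in> Dset then z$j * gvec S $ j else 0) + real (card (S \<inter> Dset))"
    by (simp only: inner_vec_def inner_real_def sum_distrib_left[symmetric] sum_indic)
  finally have "z' \<bullet> z' = z \<bullet> z + 2 * (\<Sum>j\<in>UNIV. if j \<in> Dset then z$j * gvec S $ j else 0) + real (card (S \<inter> Dset))" .
  moreover have "(\<Sum>j\<in>UNIV. if j \<in> Dset then z$j * gvec S $ j else 0) \<in> \<int>"
    using zi by (intro Ints_sum) (auto simp: gvec_nth')
  then obtain t :: int where t: "(\<Sum>j\<in>UNIV. if j \<in> Dset then z$j * gvec S $ j else 0) = of_int t"
    by (elim Ints_cases) auto
  moreover obtain k where k: "card (S \<inter> Dset) = 2 * k" using G24_D_even[OF S] by (auto elim: evenE)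
  ultimately have "z' \<bullet> z' = 2 * of_int m + 2 * of_int t + real (2 * k)"
    using m by simp
  then have "z' \<bullet> z' = 2 * of_int (m + t + int k)" by simp
  moreover have "\<forall>i. z' $ i \<in> \<int>" unfolding z'_def using zi by (auto simp: gvec_nth')
  ultimately have zp: "z' \<in> Zplus" unfolding Zplus_def by blast
  show ?thesis unfolding eq leech_def
    apply (rule UnI1)
    apply (rule CollectI)
    apply (rule exI[of _ "gvec S"])
    apply (rule exI[of _ z'])
    using zp gvec_golay[OF S] by simp
qed

lemma gm_leech2:
  assumes S: "S \<in> G24" and z: "z \<in> Zminus"
  shows "gm ((1 / (2 * sqrt 2)) *\<^sub>R ones24 + (1 / sqrt 2) *\<^sub>R gvec S + sqrt 2 *\<^sub>R z) \<in> leech"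
proof -
  define z' where "z' = (\<chi> j. if j \<in> Dset then - z$j - 1 else z$j)"
  have eq: "gm ((1 / (2 * sqrt 2)) *\<^sub>R ones24 + (1 / sqrt 2) *\<^sub>R gvec S + sqrt 2 *\<^sub>R z)
     = (1 / (2 * sqrt 2)) *\<^sub>R ones24 + (1 / sqrt 2) *\<^sub>R gvec (xr S Dset) + sqrt 2 *\<^sub>R z'"
  proof (rule vec_eq_iff[THEN iffD2], rule allI)
    fix j
    have c: "gvec (xr S Dset) $ j = (if j \<in> Dset then 1 - gvec S $ j else gvec S $ j)"
      unfolding gvec_nth' xr_def by auto
    show "gm ((1 / (2 * sqrt 2)) *\<^sub>R ones24 + (1 / sqrt 2) *\<^sub>R gvec S + sqrt 2 *\<^sub>R z) $ j
     = ((1 / (2 * sqrt 2)) *\<^sub>R ones24 + (1 / sqrt 2) *\<^sub>R gvec (xr S Dset) + sqrt 2 *\<^sub>R z') $ j"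
      unfolding gm_def z'_def using k2[of "gvec S $ j" "z $ j"] c by (simp add: ones24_def)
  qed
  have zi: "\<forall>i. z $ i \<in> \<int>" and zm: "\<exists>m::int. z \<bullet> z = 2 * of_int m + 1" using z unfolding Zminus_def by auto
  obtain m :: int where m: "z \<bullet> z = 2 * of_int m + 1" using zm by blast
  have pt: "\<And>j. z'$j * z'$j = z$j * z$j + 2 * (if j \<in> Dset then z$j else 0) + (if j \<in> Dset then 1 else 0)"
    unfolding z'_def by (auto simp: algebra_simps)
  have "z' \<bullet> z' = (\<Sum>j\<in>UNIV. z$j * z$j) + (\<Sum>j\<in>UNIV. 2 * (if j \<in> Dset then z$j else 0)) + (\<Sum>j\<in>UNIV. if j \<in> Dset then 1 else 0)"
    unfolding inner_vec_def inner_real_def pt by (simp only: sum.distrib)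
  also have "\<dots> = z \<bullet> z + 2 * (\<Sum>j\<in>UNIV. if j \<in> Dset then z$j else 0) + real (card Dset)"
    by (simp only: inner_vec_def inner_real_def sum_distrib_left[symmetric] sum_indic)
  finally have "z' \<bullet> z' = z \<bullet> z + 2 * (\<Sum>j\<in>UNIV. if j \<in> Dset then z$j else 0) + real (card Dset)" .
  moreover have "(\<Sum>j\<in>UNIV. if j \<in> Dset then z$j else 0) \<in> \<int>"
    using zi by (intro Ints_sum) auto
  then obtain t :: int where t: "(\<Sum>j\<in>UNIV. if j \<in> Dset then z$j else 0) = of_int t"
    by (elim Ints_cases) auto
  ultimately have "z' \<bullet> z' = 2 * of_int m + 1 + 2 * of_int t + 12"
    using m card_Dset by simp
  then have "z' \<bullet> z' = 2 * of_int (m + t + 6) + 1" by simp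
  moreover have "\<forall>i. z' $ i \<in> \<int>" unfolding z'_def using zi by auto
  ultimately have zp: "z' \<in> Zminus" unfolding Zminus_def by blast
  show ?thesis unfolding eq leech_def
    apply (rule UnI2)
    apply (rule CollectI)
    apply (rule exI[of _ "gvec (xr S Dset)"])
    apply (rule exI[of _ z'])
    using zp gvec_golay[OF G24_xr[OF S Dset_G24]] by simp
qed

lemma leech_cases:
  assumes "v \<in> leech"
  obtains (a) S z where "S \<in> G24" "z \<in> Zplus" "v = (1 / sqrt 2) *\<^sub>R gvec S + sqrt 2 *\<^sub>R z"
  | (b) S z where "S \<in> G24" "z \<in> Zminus" "v = (1 / (2 * sqrt 2)) *\<^sub>R ones24 + (1 / sqrt 2) *\<^sub>R gvec S + sqrt 2 *\<^sub>R z"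
proof -
  from assms[unfolded leech_def]
  consider (x) c z where "v = (1 / sqrt 2) *\<^sub>R c + sqrt 2 *\<^sub>R z" "c \<in> golay_vecs" "z \<in> Zplus"
    | (y) c z where "v = (1 / (2 * sqrt 2)) *\<^sub>R ones24 + (1 / sqrt 2) *\<^sub>R c + sqrt 2 *\<^sub>R z" "c \<in> golay_vecs" "z \<in> Zminus"
    by blast
  then show ?thesis
  proof cases
    case x
    then obtain S where "S \<in> G24" "c = gvec S" by (auto elim: golay_vecsE)
    then show ?thesis using x a by blast
  next
    case y
    then obtain S where "S \<in> G24" "c = gvec S" by (auto elim: golay_vecsE)
    then show ?thesis using y b by blast
  qed
qed

lemma gm_leech: "v \<in> leech \<Longrightarrow> gm v \<in> leech"
  by (erule leech_cases) (simp_all add: gm_leech1 gm_leech2)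

lemma hm_gvec: "hm (gvec S) = gvec (pm ` S)"
  unfolding hm_def gvec_def vec_eq_iff by (auto simp: image_iff) (metis pm_pm)

lemma hm_Zplus: "z \<in> Zplus \<Longrightarrow> hm z \<in> Zplus"
  using orth_hm unfolding Zplus_def orthogonal_transformation_def by (auto simp: hm_def)
lemma hm_Zminus: "z \<in> Zminus \<Longrightarrow> hm z \<in> Zminus"
  using orth_hm unfolding Zminus_def orthogonal_transformation_def by (auto simp: hm_def)
lemma hm_ones: "hm ones24 = ones24" unfolding hm_def ones24_def by (simp add: vec_eq_iff)

lemma hm_leech: "v \<in> leech \<Longrightarrow> hm v \<in> leech"
proof -
  assume "v \<in> leech"
  have lin: "\<And>a b x y. hm (a *\<^sub>R x + b *\<^sub>R y) = a *\<^sub>R hm x + b *\<^sub>R hm y"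
    using linear_hm by (simp add: linear_add linear_cmul)
  have lin3: "\<And>a b c x y w. hm (a *\<^sub>R x + b *\<^sub>R y + c *\<^sub>R w) = a *\<^sub>R hm x + b *\<^sub>R hm y + c *\<^sub>R hm w"
    using linear_hm by (simp add: linear_add linear_cmul)
  show ?thesis using \<open>v \<in> leech\<close> unfolding leech_def
    apply (elim UnE CollectE exE conjE)
     apply (erule golay_vecsE)
     apply (rule UnI1) apply (simp only: lin hm_gvec)
     apply (blast intro: gvec_golay pm_G24 hm_Zplus)
    apply (erule golay_vecsE)
    apply (rule UnI2) apply (simp only: lin3 hm_gvec hm_ones)
    apply (blast intro: gvec_golay pm_G24 hm_Zminus)
    done
qed

lemma invol_Co0:
  assumes "orthogonal_transformation f" "\<And>v. v \<in> leech \<Longrightarrow> f v \<in> leech" "\<And>x. f (f x) = x"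
  shows "f \<in> Co0"
proof -
  have "f ` leech \<subseteq> leech" using assms(2) by auto
  moreover have "leech \<subseteq> f ` leech" using assms(2,3) by (metis image_eqI subsetI)
  ultimately show ?thesis unfolding Co0_def using assms(1) by auto
qed

lemma gm_Co0: "gm \<in> Co0" using invol_Co0 orth_gm gm_leech gm_gm by blast
lemma hm_Co0: "hm \<in> Co0" using invol_Co0 orth_hm hm_leech hm_hm by blast



lemma leech_even_x:
  assumes "distinct A \<and> set A \<subseteq> {..<12} \<and> (\<forall>n\<in>{..<24}. a!n = 2*(if xfold A ! n then 1 else 0) + 4*z!n)
     \<and> even (\<Sum>n<24. (z!n)^2)"
  shows "(1/sqrt 8) *\<^sub>R vv a \<in> leech"
proof (rule leech_even[where C = "setl (xfold A)" and z = z])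
  show "of_nat ` setl (xfold A) \<in> G24" using xfold_G24 assms by blast
  show "setl (xfold A) \<subseteq> {..<24}" by (simp add: setl_sub len_xfold)
  show "\<forall>n<24. a ! n = 2 * (if n \<in> setl (xfold A) then 1 else 0) + 4 * z ! n"
    using assms by (simp add: setl_def len_xfold)
  show "even (\<Sum>n<24. (z ! n)\<^sup>2)" using assms by blast
qed

lemma leech_odd_x:
  assumes "distinct A \<and> set A \<subseteq> {..<12} \<and> (\<forall>n\<in>{..<24}. a!n = 1 + 2*(if xfold A ! n then 1 else 0) + 4*z!n)
     \<and> odd (\<Sum>n<24. (z!n)^2)"
  shows "(1/sqrt 8) *\<^sub>R vv a \<in> leech"
proof (rule leech_odd[where C = "setl (xfold A)" and z = z])
  show "of_nat ` setl (xfold A) \<in> G24" using xfold_G24 assms by blast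
  show "setl (xfold A) \<subseteq> {..<24}" by (simp add: setl_sub len_xfold)
  show "\<forall>n<24. a ! n = 1 + 2 * (if n \<in> setl (xfold A) then 1 else 0) + 4 * z ! n"
    using assms by (simp add: setl_def len_xfold)
  show "odd (\<Sum>n<24. (z ! n)\<^sup>2)" using assms by blast
qed

definition a1 :: "int list" where "a1 = [1, 1, 1, 1, 1, 1, 1, -1, 1, -1, 1, 1, 3, 1, 1, -1, -1, 1, -1, 1, 1, -1, -1, 1]"
definition a2 :: "int list" where "a2 = [1, 1, 1, 1, 1, 1, -1, -1, -1, -1, -1, -1, 1, 1, 1, -1, 1, -1, -1, 1, 1, 3, -1, -1]"
definition a3 :: "int list" where "a3 = [0, 0, 0, 0, 0, 0, 0, 2, 0, 2, 0, 0, 2, 0, 0, 2, 2, 0, 2, 0, 0, 2, 2, 0]"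
definition n1 :: "int list" where "n1 = [0, 2, 0, 2, 0, 2, 0, -2, 0, -2, 2, 0, 0, 2, 2, -2, -2, 0, -2, 0, 0, 0, -2, 0]"
definition n2 :: "int list" where "n2 = [0, 0, 0, 0, 0, 0, 0, 0, 0, 0, 0, 0, 4, 0, 0, 0, 0, 0, 0, 0, 0, 4, 0, 0]"
definition rr :: "int list" where "rr = [0, 2, 0, 2, 0, 2, 0, -2, 0, -2, 2, 0, 4, 2, 2, -2, -2, 0, -2, 0, 0, 4, -2, 0]"

lemma mem_a1: "(1/sqrt 8) *\<^sub>R vv a1 \<in> leech"
  by (rule leech_odd_x[where A = "[7, 11]" and z = "[0, 0, 0, 0, 0, 0, 0, -1, 0, -1, 0, 0, 0, 0, 0, -1, -1, 0, -1, 0, 0, -1, -1, 0]"])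
     (unfold a1_def, code_simp)
lemma mem_a2: "(1/sqrt 8) *\<^sub>R vv a2 \<in> leech"
  by (rule leech_odd_x[where A = "[6, 7, 11]" and z = "[0, 0, 0, 0, 0, 0, -1, -1, -1, -1, -1, -1, 0, 0, 0, -1, 0, -1, -1, 0, 0, 0, -1, -1]"])
     (unfold a2_def, code_simp)
lemma mem_a3: "(1/sqrt 8) *\<^sub>R vv a3 \<in> leech"
  by (rule leech_even_x[where A = "[7, 11]" and z = "replicate 24 0"])
     (unfold a3_def, code_simp)
lemma mem_n1: "(1/sqrt 8) *\<^sub>R vv n1 \<in> leech"
  by (rule leech_even_x[where A = "[1, 6, 8, 9, 10, 11]" and z = "[0, 0, 0, 0, 0, 0, 0, -1, 0, -1, 0, 0, 0, 0, 0, -1, -1, 0, -1, 0, 0, 0, -1, 0]"])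
     (unfold n1_def, code_simp)
lemma mem_n2: "(1/sqrt 8) *\<^sub>R vv n2 \<in> leech"
  by (rule leech_even_x[where A = "[]" and z = "[0, 0, 0, 0, 0, 0, 0, 0, 0, 0, 0, 0, 1, 0, 0, 0, 0, 0, 0, 0, 0, 1, 0, 0]"])
     (unfold n2_def, code_simp)
lemma mem_rr: "(1/sqrt 8) *\<^sub>R vv rr \<in> leech"
  by (rule leech_even_x[where A = "[1, 6, 8, 9, 10, 11]" and z = "[0, 0, 0, 0, 0, 0, 0, -1, 0, -1, 0, 0, 1, 0, 0, -1, -1, 0, -1, 0, 0, 1, -1, 0]"])
     (unfold rr_def, code_simp)



definition gl :: "int list \<Rightarrow> int list" where "gl a = map (\<lambda>n. if n \<in> Dn then - (a!n) else a!n) [0..<24]"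
definition hl :: "int list \<Rightarrow> int list" where "hl a = map (\<lambda>n. a ! (pl!n)) [0..<24]"
definition addl :: "int list \<Rightarrow> int list \<Rightarrow> int list" where "addl a b = map2 (+) a b"

abbreviation sc :: "int list \<Rightarrow> vec24" where "sc a \<equiv> (1/sqrt 8) *\<^sub>R vv a"

lemma gm_vv: "gm (vv a) = vv (gl a)"
proof (rule vec_eq24)
  fix n :: nat assume n: "n < 24"
  have "(of_nat n \<in> Dset) = (n \<in> Dn)" unfolding Dset_def using mem_img24[OF Dn_sub n] .
  then show "gm (vv a) $ of_nat n = vv (gl a) $ of_nat n"
    using n by (simp add: gm_def vv_nth gl_def)
qed

lemma hm_vv: "hm (vv a) = vv (hl a)"
proof (rule vec_eq24)
  fix n :: nat assume n: "n < 24"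
  then show "hm (vv a) $ of_nat n = vv (hl a) $ of_nat n"
    using pl_lt by (simp add: hm_def vv_nth hl_def pm_of_nat)
qed

lemma vv_add: "length a = 24 \<Longrightarrow> length b = 24 \<Longrightarrow> vv a + vv b = vv (addl a b)"
  by (rule vec_eq24) (simp add: vv_nth addl_def)

lemma gm_sc: "gm (sc a) = sc (gl a)"
  using linear_gm by (simp add: linear_cmul gm_vv)
lemma hm_sc: "hm (sc a) = sc (hl a)"
  using linear_hm by (simp add: linear_cmul hm_vv)
lemma sc_add: "length a = 24 \<Longrightarrow> length b = 24 \<Longrightarrow> sc a + sc b = sc (addl a b)"
  by (simp add: vv_add[symmetric] scaleR_right_distrib)

lemma sc_inner: "sc a \<bullet> sc b = (of_int (\<Sum>n<24. a!n * b!n)) / 8"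
proof -
  have "sc a \<bullet> sc b = (1/sqrt 8) * (1/sqrt 8) * (vv a \<bullet> vv b)" by simp
  moreover have "(1/sqrt 8) * (1/sqrt 8) = (1/8::real)" by (simp add: real_sqrt_mult[symmetric])
  moreover have "vv a \<bullet> vv b = of_int (\<Sum>n<24. a!n * b!n)" unfolding inner24 by (simp add: vv_nth)
  ultimately show ?thesis by simp
qed

lemma L1: "addl (gl a1) a1 = n1" by (unfold addl_def gl_def a1_def n1_def Dn_def, code_simp)
lemma L2: "gl n1 = n1" by (unfold gl_def n1_def Dn_def, code_simp)
lemma L3: "addl n1 a3 = hl a3" by (unfold addl_def hl_def a3_def n1_def pl_def, code_simp)
lemma L4: "addl (hl a2) a2 = n2" by (unfold addl_def hl_def a2_def n2_def pl_def, code_simp)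
lemma L5: "hl n2 = n2" by (unfold hl_def n2_def pl_def, code_simp)
lemma L6: "addl n2 (gl a3) = a3" by (unfold addl_def gl_def a3_def n2_def Dn_def, code_simp)
lemma L7: "addl n1 (gl a3) = hl (gl a3)" by (unfold addl_def hl_def gl_def a3_def n1_def pl_def Dn_def, code_simp)
lemma L8: "addl n1 n2 = rr" by (unfold addl_def rr_def n1_def n2_def, code_simp)
lemma L9: "addl n2 n1 = rr" by (unfold addl_def rr_def n1_def n2_def, code_simp)
lemma lens: "length a1 = 24" "length a2 = 24" "length a3 = 24" "length n1 = 24" "length n2 = 24"
  "length (gl a) = 24" "length (hl a) = 24"
  by (simp_all add: a1_def a2_def a3_def n1_def n2_def gl_def hl_def)

lemma P1: "(\<Sum>n<24. gl a1 ! n * a1 ! n) = -8" by (unfold gl_def a1_def Dn_def, code_simp)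
lemma P2: "(\<Sum>n<24. hl a2 ! n * a2 ! n) = -16" by (unfold hl_def a2_def pl_def, code_simp)
lemma P3: "(\<Sum>n<24. n1 ! n * n2 ! n) = 0" by (unfold n1_def n2_def, code_simp)

lemma I1: "gm (sc a1) \<bullet> sc a1 = -1" unfolding gm_sc sc_inner P1 by simp
lemma I2: "hm (sc a2) \<bullet> sc a2 = -2" unfolding hm_sc sc_inner P2 by simp
lemma I3: "sc n1 \<bullet> sc n2 = 0" unfolding sc_inner P3 by simp



lemma pm1: "(e::complex) \<in> {1, -1} \<Longrightarrow> e * e = 1" by auto

lemma alg:
  fixes A B FN1 F3 FH3 U2h U2 UN2 UP U3 ea eb ec ed x1 x2 y1 y2 eR m12 m21 :: complex
  assumes W1: "A * B = 1" and W2: "U2h * U2 = 1" and W3: "UP * F3 = FH3 * U3"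
    and I1: "ea * FN1 = A * B * eb" and I2: "x1 * FH3 = FN1 * F3 * x2"
    and I3: "ec * UN2 = U2h * U2 * ed" and I4: "y1 * U3 = UN2 * UP * y2"
    and C1: "m12 * eR = y1 * x1" and C2: "m21 * eR = x2 * y2"
    and pe: "ea \<in> {1,-1}" "ec \<in> {1,-1}" "x1 \<in> {1,-1}" "y1 \<in> {1,-1}" "eR \<in> {1,-1}"
    and cab: "ea * eb = -1" and ccd: "ec * ed = 1" and cm: "m12 * m21 = 1"
    and nz: "F3 \<noteq> 0" "UP \<noteq> 0"
  shows False
proof -
  have ea2: "ea * ea = 1" "ec * ec = 1" "x1 * x1 = 1" "y1 * y1 = 1" "eR * eR = 1" using pe pm1 by auto
  have fn1: "FN1 = -1"
  proof -
    have "ea * (ea * FN1) = ea * eb" using I1 W1 by simp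
    then show ?thesis using ea2(1) cab by (simp add: mult.assoc[symmetric])
  qed
  have un2: "UN2 = 1"
  proof -
    have "ec * (ec * UN2) = ec * ed" using I3 W2 by simp
    then show ?thesis using ea2(2) ccd by (simp add: mult.assoc[symmetric])
  qed
  have fh3: "FH3 = - (x1 * x2 * F3)"
  proof -
    have "x1 * (x1 * FH3) = x1 * (FN1 * F3 * x2)" using I2 by simp
    then show ?thesis using ea2(3) fn1 by (simp add: mult.assoc[symmetric])
  qed
  have u3: "U3 = y1 * y2 * UP"
  proof -
    have "y1 * (y1 * U3) = y1 * (UN2 * UP * y2)" using I4 by simp
    then show ?thesis using ea2(4) un2 by (simp add: mult.assoc[symmetric])
  qed
  have "FH3 * U3 = - (x1 * x2 * y1 * y2) * (UP * F3)" unfolding fh3 u3 by algebra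
  then have e: "(UP * F3) * 1 = (UP * F3) * (- (x1 * x2 * y1 * y2))" using W3 by algebra
  have "UP * F3 \<noteq> 0" using nz by simp
  then have k: "x1 * x2 * y1 * y2 = -1" using e mult_left_cancel
    by (metis minus_equation_iff)
  have "(m12 * eR) * (m21 * eR) = (y1 * x1) * (x2 * y2)" using C1 C2 by simp
  moreover have "(m12 * eR) * (m21 * eR) = (m12 * m21) * (eR * eR)" by (simp add: ac_simps)
  ultimately have "(y1 * x1) * (x2 * y2) = 1" using cm ea2(5) by simp
  then have "x1 * x2 * y1 * y2 = 1" by (simp add: ac_simps)
  then show False using k by simp
qed

lemma Co0_leech: "g \<in> Co0 \<Longrightarrow> k \<in> leech \<Longrightarrow> g k \<in> leech"
  unfolding Co0_def by blast

lemma core: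
  assumes eps: "leech_cocycle \<epsilon>"
  and nz: "\<forall>g\<in>Co0. \<forall>k\<in>leech. \<zeta> g k \<noteq> 0"
  and H2: "\<forall>g\<in>Co0. \<forall>k\<in>leech. \<forall>k'\<in>leech. k + k' \<in> leech \<longrightarrow>
              \<epsilon> k k' * \<zeta> g (k + k') = \<zeta> g k * \<zeta> g k' * \<epsilon> (g k) (g k')"
  and H3: "\<forall>g1\<in>Co0. \<forall>g2\<in>Co0. \<forall>k\<in>leech. \<zeta> g2 (g1 k) * \<zeta> g1 k = \<zeta> (g2 \<circ> g1) k"
  shows False
proof -
  have e1: "\<forall>k\<in>leech. \<forall>k'\<in>leech. \<epsilon> k k' \<in> {1, -1}"
    and e3: "\<forall>k\<in>leech. \<forall>k'\<in>leech. \<forall>k''\<in>leech. \<epsilon> k k' * \<epsilon> (k + k') k'' = \<epsilon> k' k'' * \<epsilon> k (k' + k'')"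
    and e4: "\<forall>k\<in>leech. \<forall>k'\<in>leech. \<epsilon> k k' * \<epsilon> k' k = (-1) powi \<lfloor>k \<bullet> k'\<rfloor>"
    using eps unfolding leech_cocycle_def by auto
  define V1 where "V1 = sc a1"
  define V2 where "V2 = sc a2"
  define V3 where "V3 = sc a3"
  define N1 where "N1 = sc n1"
  define N2 where "N2 = sc n2"
  define R where "R = sc rr"
  define P where "P = gm V3"
  have m: "V1 \<in> leech" "V2 \<in> leech" "V3 \<in> leech" "N1 \<in> leech" "N2 \<in> leech" "R \<in> leech"
    unfolding V1_def V2_def V3_def N1_def N2_def R_def
    using mem_a1 mem_a2 mem_a3 mem_n1 mem_n2 mem_rr by auto
  have m2: "gm V1 \<in> leech" "hm V2 \<in> leech" "P \<in> leech" "hm V3 \<in> leech" "hm P \<in> leech"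
    unfolding P_def using m Co0_leech gm_Co0 hm_Co0 by auto
  have v1: "gm V1 + V1 = N1" unfolding V1_def N1_def gm_sc by (simp add: sc_add lens L1)
  have v2: "gm N1 = N1" unfolding N1_def gm_sc L2 ..
  have v3: "N1 + V3 = hm V3" unfolding N1_def V3_def hm_sc by (simp add: sc_add lens L3)
  have v4: "hm V2 + V2 = N2" unfolding V2_def N2_def hm_sc by (simp add: sc_add lens L4)
  have v5: "hm N2 = N2" unfolding N2_def hm_sc L5 ..
  have v6: "N2 + P = V3" unfolding N2_def P_def V3_def gm_sc by (simp add: sc_add lens L6)
  have v7: "N1 + P = hm P" unfolding N1_def P_def V3_def gm_sc hm_sc by (simp add: sc_add lens L7)
  have v8: "N1 + N2 = R" unfolding N1_def N2_def R_def by (simp add: sc_add lens L8)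
  have v9: "N2 + N1 = R" unfolding N1_def N2_def R_def by (simp add: sc_add lens L9)
  have ip1: "gm V1 \<bullet> V1 = -1" unfolding V1_def using I1 .
  have ip2: "hm V2 \<bullet> V2 = -2" unfolding V2_def using I2 .
  have ip3: "N1 \<bullet> N2 = 0" unfolding N1_def N2_def using I3 .
  have G: "id \<in> Co0" "gm \<in> Co0" "hm \<in> Co0" using id_Co0 gm_Co0 hm_Co0 .
  have idone: "\<And>k. k \<in> leech \<Longrightarrow> \<zeta> id k = 1"
  proof -
    fix k assume k: "k \<in> leech"
    have "\<zeta> id (id k) * \<zeta> id k = \<zeta> (id \<circ> id) k" using H3 G k by blast
    then have "\<zeta> id k * \<zeta> id k = \<zeta> id k" by simp
    then show "\<zeta> id k = 1" using nz G k by (metis mult_cancel_right1)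
  qed
  have W1: "\<zeta> gm (gm V1) * \<zeta> gm V1 = 1"
    using H3 G m idone[of V1] gm_comp by (metis)
  have W2: "\<zeta> hm (hm V2) * \<zeta> hm V2 = 1"
    using H3 G m idone[of V2] hm_comp by (metis)
  have W3: "\<zeta> hm P * \<zeta> gm V3 = \<zeta> gm (hm V3) * \<zeta> hm V3"
  proof -
    have "\<zeta> hm (gm V3) * \<zeta> gm V3 = \<zeta> (hm \<circ> gm) V3" using H3 G m by blast
    moreover have "\<zeta> gm (hm V3) * \<zeta> hm V3 = \<zeta> (gm \<circ> hm) V3" using H3 G m by blast
    ultimately show ?thesis unfolding P_def using gh_comm by simp
  qed
  have I1': "\<epsilon> (gm V1) V1 * \<zeta> gm N1 = \<zeta> gm (gm V1) * \<zeta> gm V1 * \<epsilon> V1 (gm V1)"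
    using H2 G m m2 v1 by (metis gm_gm)
  have I2': "\<epsilon> N1 V3 * \<zeta> gm (hm V3) = \<zeta> gm N1 * \<zeta> gm V3 * \<epsilon> N1 P"
    using H2 G m m2 v2 v3 unfolding P_def by metis
  have I3': "\<epsilon> (hm V2) V2 * \<zeta> hm N2 = \<zeta> hm (hm V2) * \<zeta> hm V2 * \<epsilon> V2 (hm V2)"
    using H2 G m m2 v4 by (metis hm_hm)
  have I4': "\<epsilon> N2 P * \<zeta> hm V3 = \<zeta> hm N2 * \<zeta> hm P * \<epsilon> N2 (hm P)"
    using H2 G m m2 v5 v6 by metis
  have C1: "\<epsilon> N1 N2 * \<epsilon> R P = \<epsilon> N2 P * \<epsilon> N1 V3"
    using e3 m m2 v6 v8 by metis
  have C2: "\<epsilon> N2 N1 * \<epsilon> R P = \<epsilon> N1 P * \<epsilon> N2 (hm P)"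
    using e3 m m2 v7 v9 by metis
  have fl1: "\<lfloor>gm V1 \<bullet> V1\<rfloor> = -1" using ip1 by (simp add: floor_eq_iff)
  have fl2: "\<lfloor>hm V2 \<bullet> V2\<rfloor> = -2" using ip2 by (simp add: floor_eq_iff)
  have c1: "\<epsilon> (gm V1) V1 * \<epsilon> V1 (gm V1) = -1" using e4 m m2 fl1 ip1 by (simp add: power_int_def)
  have c2: "\<epsilon> (hm V2) V2 * \<epsilon> V2 (hm V2) = 1" using e4 m m2 fl2 ip2 by (simp add: power_int_def)
  have c3: "\<epsilon> N1 N2 * \<epsilon> N2 N1 = 1" using e4 m ip3 by simp
  show False
    apply (rule alg[OF W1 W2 W3 I1' I2' I3' I4' C1 C2 _ _ _ _ _ c1 c2 c3])
    using e1 m m2 nz G by auto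
qed



lemma hat_lemmas:
  assumes eps: "leech_cocycle \<epsilon>" and g: "g \<in> Co0" and f: "f \<in> O_hat \<epsilon>"
    and fs: "\<forall>k\<in>leech. snd (f (1, k)) = g k"
  shows "\<forall>k\<in>leech. fst (f (1, k)) \<in> {1, -1} \<and> f (1, k) = (fst (f (1, k)), g k)"
    and "\<forall>a\<in>{1,-1}. \<forall>k\<in>leech. f (a, k) = (a * fst (f (1, k)), g k)"
proof -
  have bij: "bij_betw f hatL hatL" and hom: "\<forall>x\<in>hatL. \<forall>y\<in>hatL. f (hat_mult \<epsilon> x y) = hat_mult \<epsilon> (f x) (f y)"
    and fm: "f (-1, 0) = (-1, 0)" using f unfolding O_hat_def by auto
  have e1: "\<forall>k\<in>leech. \<forall>k'\<in>leech. \<epsilon> k k' \<in> {1, -1}" and e0: "\<forall>k\<in>leech. \<epsilon> 0 k = 1 \<and> \<epsilon> k 0 = 1"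
    using eps unfolding leech_cocycle_def by auto
  have lin: "linear g" using g unfolding Co0_def orthogonal_transformation_def by auto
  have gl: "\<And>k. k \<in> leech \<Longrightarrow> g k \<in> leech" using g Co0_leech by blast
  have z: "(0::vec24) \<in> leech"
  proof -
    have "(0::vec24) = (1 / sqrt 2) *\<^sub>R gvec {} + sqrt 2 *\<^sub>R vv (replicate 24 0)"
      by (rule vec_eq24) (simp add: gvec_nth' vv_nth)
    moreover have "vv (replicate 24 0) \<in> Zplus" by (rule vv_Zplus) simp
    ultimately show ?thesis unfolding leech_def using gvec_golay[OF empty_G24] by blast
  qed
  have g0: "g 0 = 0" using lin linear_0 by blast
  have inL: "\<And>a k. a \<in> {1,-1} \<Longrightarrow> k \<in> leech \<Longrightarrow> (a, k) \<in> hatL" unfolding hatL_def by auto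
  have fin: "\<And>x. x \<in> hatL \<Longrightarrow> f x \<in> hatL" using bij bij_betwE by blast
  show A: "\<forall>k\<in>leech. fst (f (1, k)) \<in> {1, -1} \<and> f (1, k) = (fst (f (1, k)), g k)"
  proof
    fix k assume k: "k \<in> leech"
    have "f (1, k) \<in> hatL" using fin inL k by simp
    then obtain a k2 where ak: "f (1, k) = (a, k2)" "a \<in> {1, -1}" unfolding hatL_def by auto
    moreover have "k2 = g k" using fs k ak by (metis snd_conv)
    ultimately show "fst (f (1, k)) \<in> {1, -1} \<and> f (1, k) = (fst (f (1, k)), g k)" by simp
  qed
  have f10: "f (1, 0) = (1, 0)"
  proof -
    obtain b where b: "f (1, 0) = (b, 0)" "b \<in> {1,-1}" using A z g0 by (metis prod.collapse)
    have "hat_mult \<epsilon> (1, 0) (1, 0) = (1, 0)" unfolding hat_mult_def using e0 z by simp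
    then have "f (1, 0) = hat_mult \<epsilon> (f (1, 0)) (f (1, 0))" using hom inL z by (metis insertI1)
    then have "b = b * b * \<epsilon> 0 0" using b unfolding hat_mult_def by simp
    then have "b = b * b" using e0 z by simp
    then show ?thesis using b by auto
  qed
  have fa0: "\<And>a. a \<in> {1,-1} \<Longrightarrow> f (a, 0) = (a, 0)" using f10 fm by auto
  show "\<forall>a\<in>{1,-1}. \<forall>k\<in>leech. f (a, k) = (a * fst (f (1, k)), g k)"
  proof (intro ballI)
    fix a :: complex and k assume a: "a \<in> {1,-1}" and k: "k \<in> leech"
    have "(a, k) = hat_mult \<epsilon> (a, 0) (1, k)" unfolding hat_mult_def using e0 k by simp
    then have "f (a, k) = hat_mult \<epsilon> (f (a, 0)) (f (1, k))" using hom inL a k z by (metis insert_iff)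
    also have "\<dots> = hat_mult \<epsilon> (a, 0) (fst (f (1, k)), g k)" using fa0 a A k by metis
    also have "\<dots> = (a * fst (f (1, k)), g k)" unfolding hat_mult_def using e0 gl k by simp
    finally show "f (a, k) = (a * fst (f (1, k)), g k)" .
  qed
qed

theorem mainTheorem2:
  fixes \<epsilon> :: "vec24 \<Rightarrow> vec24 \<Rightarrow> complex"
  assumes "leech_cocycle \<epsilon>"
  shows "\<not> (\<exists>\<zeta> :: (vec24 \<Rightarrow> vec24) \<Rightarrow> vec24 \<Rightarrow> complex.
            (\<forall>g\<in>Co0. \<forall>k\<in>leech. cmod (\<zeta> g k) = 1) \<and>
            (\<forall>g\<in>Co0. \<forall>k\<in>leech. \<forall>k'\<in>leech.
               \<epsilon> k k' * \<zeta> g (k + k') = \<zeta> g k * \<zeta> g k' * \<epsilon> (g k) (g k')) \<and>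
            (\<forall>g1\<in>Co0. \<forall>g2\<in>Co0. \<forall>k\<in>leech.
               \<zeta> g2 (g1 k) * \<zeta> g1 k = \<zeta> (g2 \<circ> g1) k))
       \<and> \<not> (\<exists>s :: (vec24 \<Rightarrow> vec24) \<Rightarrow> (complex \<times> vec24) \<Rightarrow> (complex \<times> vec24).
            (\<forall>g\<in>Co0. s g \<in> O_hat \<epsilon> \<and> (\<forall>k\<in>leech. snd (s g (1, k)) = g k)) \<and>
            (\<forall>g1\<in>Co0. \<forall>g2\<in>Co0. \<forall>x\<in>hatL. s (g2 \<circ> g1) x = s g2 (s g1 x)))"
proof (intro conjI notI)
  assume "\<exists>\<zeta> :: (vec24 \<Rightarrow> vec24) \<Rightarrow> vec24 \<Rightarrow> complex.
            (\<forall>g\<in>Co0. \<forall>k\<in>leech. cmod (\<zeta> g k) = 1) \<and>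
            (\<forall>g\<in>Co0. \<forall>k\<in>leech. \<forall>k'\<in>leech.
               \<epsilon> k k' * \<zeta> g (k + k') = \<zeta> g k * \<zeta> g k' * \<epsilon> (g k) (g k')) \<and>
            (\<forall>g1\<in>Co0. \<forall>g2\<in>Co0. \<forall>k\<in>leech.
               \<zeta> g2 (g1 k) * \<zeta> g1 k = \<zeta> (g2 \<circ> g1) k)"
  then obtain \<zeta> :: "(vec24 \<Rightarrow> vec24) \<Rightarrow> vec24 \<Rightarrow> complex" where
    h1: "\<forall>g\<in>Co0. \<forall>k\<in>leech. cmod (\<zeta> g k) = 1" and
    h2: "\<forall>g\<in>Co0. \<forall>k\<in>leech. \<forall>k'\<in>leech. \<epsilon> k k' * \<zeta> g (k + k') = \<zeta> g k * \<zeta> g k' * \<epsilon> (g k) (g k')" and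
    h3: "\<forall>g1\<in>Co0. \<forall>g2\<in>Co0. \<forall>k\<in>leech. \<zeta> g2 (g1 k) * \<zeta> g1 k = \<zeta> (g2 \<circ> g1) k"
    by blast
  have nz: "\<forall>g\<in>Co0. \<forall>k\<in>leech. \<zeta> g k \<noteq> 0" using h1 by (metis norm_zero zero_neq_one)
  show False using core[OF assms nz _ h3] h2 by blast
next
  assume "\<exists>s :: (vec24 \<Rightarrow> vec24) \<Rightarrow> (complex \<times> vec24) \<Rightarrow> (complex \<times> vec24).
            (\<forall>g\<in>Co0. s g \<in> O_hat \<epsilon> \<and> (\<forall>k\<in>leech. snd (s g (1, k)) = g k)) \<and>
            (\<forall>g1\<in>Co0. \<forall>g2\<in>Co0. \<forall>x\<in>hatL. s (g2 \<circ> g1) x = s g2 (s g1 x))"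
  then obtain s :: "(vec24 \<Rightarrow> vec24) \<Rightarrow> (complex \<times> vec24) \<Rightarrow> (complex \<times> vec24)" where
    s1: "\<forall>g\<in>Co0. s g \<in> O_hat \<epsilon> \<and> (\<forall>k\<in>leech. snd (s g (1, k)) = g k)" and
    s2: "\<forall>g1\<in>Co0. \<forall>g2\<in>Co0. \<forall>x\<in>hatL. s (g2 \<circ> g1) x = s g2 (s g1 x)"
    by blast
  define \<zeta> where "\<zeta> g k = fst (s g (1, k))" for g k
  have A: "\<And>g k. g \<in> Co0 \<Longrightarrow> k \<in> leech \<Longrightarrow> \<zeta> g k \<in> {1,-1} \<and> s g (1, k) = (\<zeta> g k, g k)"
    using hat_lemmas(1)[OF assms] s1 unfolding \<zeta>_def by blast
  have B: "\<And>g a k. g \<in> Co0 \<Longrightarrow> a \<in> {1,-1} \<Longrightarrow> k \<in> leech \<Longrightarrow> s g (a, k) = (a * \<zeta> g k, g k)"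
    using hat_lemmas(2)[OF assms] s1 unfolding \<zeta>_def by blast
  have e1: "\<forall>k\<in>leech. \<forall>k'\<in>leech. \<epsilon> k k' \<in> {1, -1}"
    using assms unfolding leech_cocycle_def by auto
  have nz: "\<forall>g\<in>Co0. \<forall>k\<in>leech. \<zeta> g k \<noteq> 0" using A by fastforce
  have H2: "\<forall>g\<in>Co0. \<forall>k\<in>leech. \<forall>k'\<in>leech. k + k' \<in> leech \<longrightarrow>
              \<epsilon> k k' * \<zeta> g (k + k') = \<zeta> g k * \<zeta> g k' * \<epsilon> (g k) (g k')"
  proof (intro ballI impI)
    fix g k k' assume g: "g \<in> Co0" and k: "k \<in> leech" and k': "k' \<in> leech" and kk: "k + k' \<in> leech"
    have hom: "\<forall>x\<in>hatL. \<forall>y\<in>hatL. s g (hat_mult \<epsilon> x y) = hat_mult \<epsilon> (s g x) (s g y)"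
      using s1 g unfolding O_hat_def by blast
    have inL: "(1, k) \<in> hatL" "(1, k') \<in> hatL" using k k' unfolding hatL_def by auto
    have "s g (hat_mult \<epsilon> (1, k) (1, k')) = hat_mult \<epsilon> (s g (1, k)) (s g (1, k'))" using hom inL by blast
    moreover have "hat_mult \<epsilon> (1, k) (1, k') = (\<epsilon> k k', k + k')" unfolding hat_mult_def by simp
    moreover have "s g (\<epsilon> k k', k + k') = (\<epsilon> k k' * \<zeta> g (k + k'), g (k + k'))"
      using B g e1 k k' kk by blast
    moreover have "hat_mult \<epsilon> (s g (1, k)) (s g (1, k')) = (\<zeta> g k * \<zeta> g k' * \<epsilon> (g k) (g k'), g k + g k')"
      using A g k k' unfolding hat_mult_def by simp
    ultimately show "\<epsilon> k k' * \<zeta> g (k + k') = \<zeta> g k * \<zeta> g k' * \<epsilon> (g k) (g k')" by simp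
  qed
  have H3: "\<forall>g1\<in>Co0. \<forall>g2\<in>Co0. \<forall>k\<in>leech. \<zeta> g2 (g1 k) * \<zeta> g1 k = \<zeta> (g2 \<circ> g1) k"
  proof (intro ballI)
    fix g1 g2 k assume g1: "g1 \<in> Co0" and g2: "g2 \<in> Co0" and k: "k \<in> leech"
    have inL: "(1, k) \<in> hatL" using k unfolding hatL_def by auto
    have "s (g2 \<circ> g1) (1, k) = s g2 (s g1 (1, k))" using s2 g1 g2 inL by blast
    also have "\<dots> = s g2 (\<zeta> g1 k, g1 k)" using A g1 k by simp
    also have "\<dots> = (\<zeta> g1 k * \<zeta> g2 (g1 k), g2 (g1 k))" using B A g1 g2 k Co0_leech by blast
    finally show "\<zeta> g2 (g1 k) * \<zeta> g1 k = \<zeta> (g2 \<circ> g1) k" unfolding \<zeta>_def by (simp add: mult.commute)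
  qed
  show False using core[OF assms nz H2 H3] .
qed


end
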